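(* Let $S\ge1$ and $k\ge2$ be integers, and let $(e_n(s))_{n\ge1,1\le s\le S}$ be independent random variables uniform on $\{-1,+1\}$. For $N\ge1$ put $G_{N,S}(s)=(e_1(s),\dots,e_N(s))$, $1\le s\le S$. Let $N_1<N_2<\cdots$ be a strictly increasing sequence of positive integers. Then, almost surely, \[ \Phi_k(G_{N_{r+1},S})-\Phi_k(G_{N_r,S})\le\sqrt{6(N_{r+1}-N_r)(k-1)\log N_{r+1}} \] for all sufficiently large $r$.
   Context: For a map $G_{N,S}:\{1,\dots,S\}\to\{-1,+1\}^N$, $G_{N,S}(s)=(e_1(s),\dots,e_N(s))$, the cross-correlation measure of order $k$ is \[ \Phi_k(G_{N,S})=\max\left|\sum_{n=1}^M e_{n+d_1}(s_1)\cdots e_{n+d_k}(s_k)\right|, \] the maximum taken over all integers $M,d_1,\dots,d_k$ and $1\le s_1,\dots,s_k\le S$ with $0\le d_1\le\dots\le d_k<M+d_k\le N$ and $d_i\ne d_j$ whenever $s_i=s_j$. $\log$ is the natural logarithm. *)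

theory Defs
  imports "HOL-Probability.Probability"
begin

definition ccm_admissible ::
    "nat \<Rightarrow> nat \<Rightarrow> nat \<Rightarrow> nat \<Rightarrow> (nat \<Rightarrow> nat) \<Rightarrow> (nat \<Rightarrow> nat) \<Rightarrow> bool" where
  "ccm_admissible k S N M d s \<longleftrightarrow>
     (\<forall>i\<in>{1..k}. 1 \<le> s i \<and> s i \<le> S) \<and>
     (\<forall>i\<in>{1..k}. \<forall>j\<in>{1..k}. i \<le> j \<longrightarrow> d i \<le> d j) \<and>
     d k < M + d k \<and> M + d k \<le> N \<and>
     (\<forall>i\<in>{1..k}. \<forall>j\<in>{1..k}. i \<noteq> j \<and> s i = s j \<longrightarrow> d i \<noteq> d j)"

text \<open>Cross-correlation measure Phi_k(G_{N,S}) of the sequences e(n,s) (n \<ge> 1, 1 \<le> s \<le> S).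
  The maximum over an empty set of parameters is taken to be 0.\<close>
definition cross_corr :: "nat \<Rightarrow> nat \<Rightarrow> nat \<Rightarrow> (nat \<Rightarrow> nat \<Rightarrow> real) \<Rightarrow> real" where
  "cross_corr k S N e = Max (insert 0
     {\<bar>\<Sum>n=1..M. \<Prod>i=1..k. e (n + d i) (s i)\<bar> | M d s. ccm_admissible k S N M d s})"

end

theory Submission
  imports Defs
begin

lemma cosh_le_exp_sq: "cosh (l::real) \<le> exp (l^2/2)"
proof -
  have main: "cosh l \<le> exp (l^2/2)" if "l \<ge> 0" for l :: real
  proof -
    have H: "-(2*l) * (1/2) + ln (1 + (1/2) * (exp (2*l) - 1)) \<le> (2*l)^2/8"
      using Hoeffdings_lemma_aux[of "2*l" "1/2"] that by simp
    have pos: "1 + (1/2) * (exp (2*l) - 1) > 0" by (simp add: field_simps add_pos_pos)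
    have e2: "exp (2*l) = exp l * exp l" by (metis exp_add mult_2)
    have "exp (-(2*l) * (1/2) + ln (1 + (1/2) * (exp (2*l) - 1)))
          = exp (-l) * (1 + (1/2) * (exp (2*l) - 1))"
      using pos by (simp only: exp_add exp_ln) simp
    also have "\<dots> = (exp l + exp (-l)) / 2"
      unfolding e2 exp_minus by (simp add: field_simps)
    also have "\<dots> = cosh l" by (simp add: cosh_def)
    finally have "cosh l = exp (-(2*l) * (1/2) + ln (1 + (1/2) * (exp (2*l) - 1)))" by simp
    also have "\<dots> \<le> exp ((2*l)^2/8)" using H by simp
    also have "(2*l)^2/8 = l^2/2" by (simp add: power2_eq_square)
    finally show ?thesis .
  qed
  show ?thesis
  proof (cases "l \<ge> 0")
    case True then show ?thesis by (rule main)
  next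
    case False then show ?thesis using main[of "-l"] by simp
  qed
qed
lemma prod_pm1:
  assumes "finite I" "\<forall>i\<in>I. f i \<in> {-1, 1::real}"
  shows "prod f I \<in> {-1, 1}"
  using assms by (induction I rule: finite_induct) auto

definition Pm :: "nat \<Rightarrow> (nat \<Rightarrow> nat) \<Rightarrow> (nat \<Rightarrow> nat) \<Rightarrow> nat \<Rightarrow> (nat \<times> nat \<Rightarrow> real) \<Rightarrow> real" where
  "Pm k h s m x = (\<Prod>i=1..k. x (m - h i, s i))"

definition Tsum :: "nat \<Rightarrow> (nat \<Rightarrow> nat) \<Rightarrow> (nat \<Rightarrow> nat) \<Rightarrow> nat set \<Rightarrow> (nat \<times> nat \<Rightarrow> real) \<Rightarrow> real" where
  "Tsum k h s W x = (\<Sum>m\<in>W. Pm k h s m x)"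

lemma mgf_count:
  fixes C :: "(nat \<times> nat) set" and l :: real
  assumes C: "finite C" and W: "finite W" and k: "k \<ge> 1"
    and pos: "\<forall>m\<in>W. \<forall>i\<in>{1..k}. h i < m \<and> (m - h i, s i) \<in> C"
    and dist: "\<forall>i\<in>{1..k}. \<forall>j\<in>{1..k}. i \<noteq> j \<longrightarrow> (h i, s i) \<noteq> (h j, s j)"
  shows "(\<Sum>x\<in>PiE C (\<lambda>_. {-1,1::real}). exp (l * Tsum k h s W x))
         = real (card (PiE C (\<lambda>_. {-1,1::real}))) * cosh l ^ card W"
  using W pos
proof (induction W rule: finite_linorder_max_induct)
  case empty then show ?case by (simp add: Tsum_def)
next
  case (insert b A)
  define X where "X = PiE C (\<lambda>_. {-1,1::real})"
  have "Min (h ` {1..k}) \<in> h ` {1..k}" using k by (intro Min_in) auto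
  then obtain i0 where i0: "i0 \<in> {1..k}" "h i0 = Min (h ` {1..k})" by auto
  have i0min: "h i0 \<le> h i" if "i \<in> {1..k}" for i using i0 that by auto
  define c0 where "c0 = (b - h i0, s i0)"
  have bpos: "\<forall>i\<in>{1..k}. h i < b \<and> (b - h i, s i) \<in> C" using insert.prems by auto
  have c0C: "c0 \<in> C" using bpos i0(1) unfolding c0_def by blast
  define \<phi> where "\<phi> = (\<lambda>x::nat\<times>nat\<Rightarrow>real. x(c0 := - x c0))"
  have phiX: "\<phi> x \<in> X" if "x \<in> X" for x
    using that c0C unfolding X_def \<phi>_def PiE_iff extensional_def by auto
  have phiphi: "\<phi> (\<phi> x) = x" for x unfolding \<phi>_def by auto
  have bij: "bij_betw \<phi> X X"
    by (rule bij_betwI[of \<phi> X X \<phi>]) (use phiX phiphi in auto)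
  have T_phi: "Tsum k h s A (\<phi> x) = Tsum k h s A x" for x
    unfolding Tsum_def Pm_def
  proof (intro sum.cong refl prod.cong)
    fix m i assume m: "m \<in> A" and i: "i \<in> {1..k}"
    have "h i < m" using insert.prems m i by auto
    moreover have "m < b" using insert.hyps m by auto
    moreover have "h i0 \<le> h i" using i0min i .
    ultimately have "m - h i < b - h i0" by linarith
    then have "(m - h i, s i) \<noteq> c0" by (auto simp: c0_def)
    then show "\<phi> x (m - h i, s i) = x (m - h i, s i)" by (simp add: \<phi>_def)
  qed
  have P_split: "Pm k h s b y = y c0 * (\<Prod>i\<in>{1..k}-{i0}. y (b - h i, s i))" for y
    unfolding Pm_def c0_def using i0(1) by (subst prod.remove[of _ i0]) auto
  have P_phi: "Pm k h s b (\<phi> x) = - Pm k h s b x" for x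
  proof -
    have "(\<Prod>i\<in>{1..k}-{i0}. \<phi> x (b - h i, s i)) = (\<Prod>i\<in>{1..k}-{i0}. x (b - h i, s i))"
    proof (intro prod.cong refl)
      fix i assume i: "i \<in> {1..k} - {i0}"
      have "(b - h i, s i) \<noteq> c0"
      proof
        assume eq: "(b - h i, s i) = c0"
        have "h i < b" "h i0 < b" using bpos i i0(1) by auto
        with eq have "h i = h i0" "s i = s i0" by (auto simp: c0_def)
        with dist i i0(1) show False by auto
      qed
      then show "\<phi> x (b - h i, s i) = x (b - h i, s i)" by (simp add: \<phi>_def)
    qed
    then show ?thesis unfolding P_split by (simp add: \<phi>_def)
  qed
  have Pb: "Pm k h s b x \<in> {-1,1}" if "x \<in> X" for x
    unfolding Pm_def
    by (rule prod_pm1) (use that bpos in \<open>auto simp: X_def PiE_iff\<close>)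
  have bA: "b \<notin> A" using insert.hyps by auto
  have Tins: "Tsum k h s (insert b A) x = Pm k h s b x + Tsum k h s A x" for x
    unfolding Tsum_def using insert.hyps bA by (simp add: sum.insert)
  define S where "S = (\<Sum>x\<in>X. exp (l * Tsum k h s (insert b A) x))"
  have S2: "S = (\<Sum>x\<in>X. exp (l * (- Pm k h s b x + Tsum k h s A x)))"
  proof -
    have "S = (\<Sum>x\<in>X. exp (l * Tsum k h s (insert b A) (\<phi> x)))"
      unfolding S_def by (rule sum.reindex_bij_betw[OF bij, symmetric])
    then show ?thesis by (simp add: Tins P_phi T_phi)
  qed
  have "2 * S = (\<Sum>x\<in>X. exp (l * (Pm k h s b x + Tsum k h s A x)) + exp (l * (- Pm k h s b x + Tsum k h s A x)))"
  proof -
    have S1: "S = (\<Sum>x\<in>X. exp (l * (Pm k h s b x + Tsum k h s A x)))" by (simp add: S_def Tins)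
    have "2 * S = (\<Sum>x\<in>X. exp (l * (Pm k h s b x + Tsum k h s A x))) + (\<Sum>x\<in>X. exp (l * (- Pm k h s b x + Tsum k h s A x)))"
      using S1 S2 by linarith
    then show ?thesis by (simp only: sum.distrib)
  qed
  also have "\<dots> = (\<Sum>x\<in>X. 2 * cosh l * exp (l * Tsum k h s A x))"
  proof (intro sum.cong refl)
    fix x assume x: "x \<in> X"
    have e: "exp (l * (p + t)) + exp (l * (- p + t)) = 2 * cosh l * exp (l*t)" if "p \<in> {-1,1}" for p t :: real
    proof -
      have "exp (l * (p + t)) + exp (l * (- p + t)) = (exp (l*p) + exp (-(l*p))) * exp (l*t)"
        by (simp add: algebra_simps exp_add[symmetric])
      also have "exp (l*p) + exp (-(l*p)) = 2 * cosh l" using that by (auto simp: cosh_def)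
      finally show ?thesis .
    qed
    show "exp (l * (Pm k h s b x + Tsum k h s A x)) + exp (l * (- Pm k h s b x + Tsum k h s A x))
        = 2 * cosh l * exp (l * Tsum k h s A x)" by (rule e[OF Pb[OF x]])
  qed
  also have "\<dots> = 2 * cosh l * (\<Sum>x\<in>X. exp (l * Tsum k h s A x))"
    by (simp add: sum_distrib_left)
  also have "(\<Sum>x\<in>X. exp (l * Tsum k h s A x)) = real (card X) * cosh l ^ card A"
    using insert.IH insert.prems unfolding X_def by auto
  finally have "S = real (card X) * cosh l ^ Suc (card A)" by simp
  then show ?case using insert.hyps bA by (simp add: S_def X_def)
qed

lemma one_side_count:
  fixes C :: "(nat \<times> nat) set" and l c :: real
  assumes C: "finite C" and W: "finite W" and k: "k \<ge> 1"
    and pos: "\<forall>m\<in>W. \<forall>i\<in>{1..k}. h i < m \<and> (m - h i, s i) \<in> C"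
    and dist: "\<forall>i\<in>{1..k}. \<forall>j\<in>{1..k}. i \<noteq> j \<longrightarrow> (h i, s i) \<noteq> (h j, s j)"
  shows "real (card {x\<in>PiE C (\<lambda>_. {-1,1::real}). l * Tsum k h s W x \<ge> c})
         \<le> real (card (PiE C (\<lambda>_. {-1,1::real}))) * exp (l^2 * card W / 2 - c)"
proof -
  define X where "X = PiE C (\<lambda>_. {-1,1::real})"
  have fX: "finite X" unfolding X_def using C by (intro finite_PiE) auto
  have "real (card {x\<in>X. l * Tsum k h s W x \<ge> c}) = (\<Sum>x\<in>{x\<in>X. l * Tsum k h s W x \<ge> c}. 1)"
    by simp
  also have "\<dots> \<le> (\<Sum>x\<in>{x\<in>X. l * Tsum k h s W x \<ge> c}. exp (l * Tsum k h s W x - c))"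
    by (intro sum_mono) auto
  also have "\<dots> \<le> (\<Sum>x\<in>X. exp (l * Tsum k h s W x - c))"
    by (intro sum_mono2 fX) auto
  also have "\<dots> = exp (-c) * (\<Sum>x\<in>X. exp (l * Tsum k h s W x))"
    by (simp add: sum_distrib_left exp_diff exp_minus field_simps)
  also have "(\<Sum>x\<in>X. exp (l * Tsum k h s W x)) = real (card X) * cosh l ^ card W"
    unfolding X_def by (rule mgf_count[OF C W k pos dist])
  also have "cosh l ^ card W \<le> exp (l^2/2) ^ card W"
    by (intro power_mono cosh_le_exp_sq) auto
  also have "exp (l^2/2) ^ card W = exp (l^2 * card W / 2)"
    by (simp add: exp_of_nat_mult[symmetric] algebra_simps)
  finally have "real (card {x\<in>X. l * Tsum k h s W x \<ge> c}) \<le> exp (-c) * (real (card X) * exp (l^2 * card W / 2))"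
    by (simp add: mult_left_mono)
  also have "\<dots> = real (card X) * exp (l^2 * card W / 2 - c)"
    unfolding exp_diff exp_minus by (simp add: field_simps)
  finally show ?thesis unfolding X_def .
qed

lemma abs_tail_count:
  fixes C :: "(nat \<times> nat) set" and t :: real
  assumes C: "finite C" and W: "finite W" "W \<noteq> {}" and k: "k \<ge> 1" and t: "t \<ge> 0"
    and pos: "\<forall>m\<in>W. \<forall>i\<in>{1..k}. h i < m \<and> (m - h i, s i) \<in> C"
    and dist: "\<forall>i\<in>{1..k}. \<forall>j\<in>{1..k}. i \<noteq> j \<longrightarrow> (h i, s i) \<noteq> (h j, s j)"
  shows "real (card {x\<in>PiE C (\<lambda>_. {-1,1::real}). \<bar>Tsum k h s W x\<bar> > t})
         \<le> 2 * real (card (PiE C (\<lambda>_. {-1,1::real}))) * exp (- (t^2 / (2 * card W)))"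
proof -
  define X where "X = PiE C (\<lambda>_. {-1,1::real})"
  define L where "L = real (card W)"
  have L: "L > 0" using W by (simp add: L_def card_gt_0_iff)
  have fX: "finite X" unfolding X_def using C by (intro finite_PiE) auto
  define l where "l = t / L"
  have ex: "l^2 * L / 2 - t^2 / L = - (t^2 / (2 * L))" "(-l)^2 * L / 2 - t^2 / L = - (t^2 / (2 * L))"
    using L by (simp_all add: l_def field_simps power2_eq_square)
  have sub: "{x\<in>X. \<bar>Tsum k h s W x\<bar> > t} \<subseteq> {x\<in>X. l * Tsum k h s W x \<ge> t^2/L} \<union> {x\<in>X. (-l) * Tsum k h s W x \<ge> t^2/L}"
  proof
    fix x assume x: "x \<in> {x\<in>X. \<bar>Tsum k h s W x\<bar> > t}"
    have l0: "l \<ge> 0" using t L by (simp add: l_def)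
    have tl: "t^2/L = l * t" using L by (simp add: l_def power2_eq_square)
    show "x \<in> {x\<in>X. l * Tsum k h s W x \<ge> t^2/L} \<union> {x\<in>X. (-l) * Tsum k h s W x \<ge> t^2/L}"
    proof (cases "Tsum k h s W x \<ge> 0")
      case True
      then have "l * Tsum k h s W x \<ge> l * t" using x l0 by (intro mult_left_mono) auto
      then show ?thesis using x tl by auto
    next
      case False
      then have "l * (- Tsum k h s W x) \<ge> l * t" using x l0 by (intro mult_left_mono) auto
      then show ?thesis using x tl by auto
    qed
  qed
  have "real (card {x\<in>X. \<bar>Tsum k h s W x\<bar> > t})
      \<le> real (card {x\<in>X. l * Tsum k h s W x \<ge> t^2/L}) + real (card {x\<in>X. (-l) * Tsum k h s W x \<ge> t^2/L})"
  proof -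
    have "card {x\<in>X. \<bar>Tsum k h s W x\<bar> > t} \<le> card ({x\<in>X. l * Tsum k h s W x \<ge> t^2/L} \<union> {x\<in>X. (-l) * Tsum k h s W x \<ge> t^2/L})"
      by (rule card_mono[OF _ sub]) (use fX in auto)
    also have "\<dots> \<le> card {x\<in>X. l * Tsum k h s W x \<ge> t^2/L} + card {x\<in>X. (-l) * Tsum k h s W x \<ge> t^2/L}"
      by (rule card_Un_le)
    finally show ?thesis by linarith
  qed
  also have "\<dots> \<le> real (card X) * exp (- (t^2 / (2 * L))) + real (card X) * exp (- (t^2 / (2 * L)))"
    using one_side_count[OF C W(1) k pos dist, where l=l and c="t^2/L"] one_side_count[OF C W(1) k pos dist, where l="-l" and c="t^2/L"]
    unfolding X_def L_def[symmetric] ex by (intro add_mono) auto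
  finally show ?thesis unfolding X_def L_def by simp
qed

context prob_space begin

lemma prob_by_count:
  fixes X :: "nat \<times> nat \<Rightarrow> 'a \<Rightarrow> real" and C :: "(nat \<times> nat) set" and Q :: "(nat \<times> nat \<Rightarrow> real) \<Rightarrow> bool"
  assumes indep: "indep_vars (\<lambda>_. borel) X I"
    and C: "finite C" "C \<noteq> {}" "C \<subseteq> I"
    and half: "\<And>c. c \<in> C \<Longrightarrow> prob {\<omega>\<in>space M. X c \<omega> = 1} = 1/2 \<and> prob {\<omega>\<in>space M. X c \<omega> = -1} = 1/2"
    and Qloc: "\<And>y z. (\<forall>c\<in>C. y c = z c) \<Longrightarrow> Q y = Q z"
  shows "prob {\<omega>\<in>space M. Q (\<lambda>c. X c \<omega>)} \<le> real (card {x\<in>PiE C (\<lambda>_. {-1,1::real}). Q x}) / 2 ^ card C"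
proof -
  have meas: "X c \<in> borel_measurable M" if "c \<in> C" for c
    using indep C(3) that unfolding indep_vars_def by auto
  define B where "B = {x\<in>PiE C (\<lambda>_. {-1,1::real}). Q x}"
  define A where "A x = {\<omega>\<in>space M. \<forall>c\<in>C. X c \<omega> = x c}" for x :: "nat \<times> nat \<Rightarrow> real"
  have finB: "finite B" unfolding B_def using C(1) by (intro finite_subset[OF _ finite_PiE[of C "\<lambda>_. {-1,1::real}"]]) auto
  have Aeq: "A x = (\<Inter>c\<in>C. X c -` {x c} \<inter> space M)" for x
    using C(2) by (auto simp: A_def)
  have Ameas: "A x \<in> events" for x
    unfolding Aeq using C(1,2) meas by (intro sets.finite_INT) (auto intro: measurable_sets)
  have probA: "prob (A x) = (1/2) ^ card C" if x: "x \<in> PiE C (\<lambda>_. {-1,1::real})" for x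
  proof -
    have "prob (A x) = (\<Prod>c\<in>C. prob (X c -` {x c} \<inter> space M))"
      unfolding Aeq by (rule indep_varsD[OF indep C(2) C(1) C(3)]) auto
    also have "\<dots> = (\<Prod>c\<in>C. 1/2)"
    proof (intro prod.cong refl)
      fix c assume c: "c \<in> C"
      have "x c \<in> {-1,1}" using x c by (auto simp: PiE_iff)
      moreover have "X c -` {x c} \<inter> space M = {\<omega>\<in>space M. X c \<omega> = x c}" by auto
      ultimately show "prob (X c -` {x c} \<inter> space M) = 1/2" using half[OF c] by auto
    qed
    finally show ?thesis by simp
  qed
  have AE1: "AE \<omega> in M. \<forall>c\<in>C. X c \<omega> \<in> {-1,1}"
  proof (rule AE_finite_allI[OF C(1)])
    fix c assume c: "c \<in> C"
    have m1: "{\<omega>\<in>space M. X c \<omega> = 1} \<in> events" "{\<omega>\<in>space M. X c \<omega> = -1} \<in> events"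
      using meas[OF c] by measurable
    have "prob ({\<omega>\<in>space M. X c \<omega> = 1} \<union> {\<omega>\<in>space M. X c \<omega> = -1}) = prob {\<omega>\<in>space M. X c \<omega> = 1} + prob {\<omega>\<in>space M. X c \<omega> = -1}"
      by (rule finite_measure_Union[OF m1]) auto
    then have "prob ({\<omega>\<in>space M. X c \<omega> = 1} \<union> {\<omega>\<in>space M. X c \<omega> = -1}) = 1" using half[OF c] by simp
    from AE_prob_1[OF this] show "AE \<omega> in M. X c \<omega> \<in> {-1,1}" by eventually_elim auto
  qed
  have "prob {\<omega>\<in>space M. Q (\<lambda>c. X c \<omega>)} \<le> prob (\<Union>x\<in>B. A x)"
  proof (rule finite_measure_mono_AE)
    show "(\<Union>x\<in>B. A x) \<in> events" using finB Ameas by auto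
    show "AE \<omega> in M. \<omega> \<in> {\<omega>\<in>space M. Q (\<lambda>c. X c \<omega>)} \<longrightarrow> \<omega> \<in> (\<Union>x\<in>B. A x)"
      using AE1
    proof eventually_elim
      case (elim \<omega>)
      show ?case
      proof
        assume \<omega>: "\<omega> \<in> {\<omega>\<in>space M. Q (\<lambda>c. X c \<omega>)}"
        define x where "x = restrict (\<lambda>c. X c \<omega>) C"
        have "x \<in> PiE C (\<lambda>_. {-1,1::real})" using elim by (auto simp: x_def PiE_iff)
        moreover have "Q x" using \<omega> Qloc[of x "\<lambda>c. X c \<omega>"] by (auto simp: x_def)
        moreover have "\<omega> \<in> A x" using \<omega> by (auto simp: A_def x_def)
        ultimately show "\<omega> \<in> (\<Union>x\<in>B. A x)" by (auto simp: B_def)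
      qed
    qed
  qed
  also have "\<dots> \<le> (\<Sum>x\<in>B. prob (A x))"
    by (rule measure_UNION_le[OF finB]) (use Ameas in auto)
  also have "\<dots> = (\<Sum>x\<in>B. (1/2) ^ card C)"
    by (intro sum.cong refl probA) (auto simp: B_def)
  also have "\<dots> = real (card B) / 2 ^ card C" by (simp add: power_one_over)
  finally show ?thesis by (simp add: B_def)
qed

end

definition hext :: "nat \<Rightarrow> (nat \<Rightarrow> nat) \<Rightarrow> nat \<Rightarrow> nat" where
  "hext k h = (\<lambda>i. if i = k then 0 else h i)"

definition Fset :: "nat \<Rightarrow> nat \<Rightarrow> nat \<Rightarrow> nat \<Rightarrow> ((nat \<Rightarrow> nat) \<times> (nat \<Rightarrow> nat) \<times> nat \<times> nat) set" where
  "Fset k S N N' = {(h, s, a, b). h \<in> PiE {1..k-1} (\<lambda>_. {..<N'}) \<and> s \<in> PiE {1..k} (\<lambda>_. {1..S}) \<and>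
      (\<forall>i\<in>{1..k}. \<forall>j\<in>{1..k}. i \<noteq> j \<longrightarrow> (hext k h i, s i) \<noteq> (hext k h j, s j)) \<and>
      N < a \<and> a \<le> b \<and> b \<le> N' \<and> (\<forall>i\<in>{1..k}. hext k h i < a)}"

lemma cc_finite:
  "finite {\<bar>\<Sum>n=1..M. \<Prod>i=1..k. x (n + d i) (s i)\<bar> | M d s. ccm_admissible k S N M d s}"
proof -
  define f where "f = (\<lambda>(M, d, s). \<bar>\<Sum>n=1..M. \<Prod>i=1..k. x (n + d i) (s i)\<bar>)"
  define D where "D = {..N} \<times> PiE {1..k} (\<lambda>_. {..N}) \<times> PiE {1..k} (\<lambda>_. {..S})"
  have "finite D" unfolding D_def by (intro finite_cartesian_product finite_PiE) auto
  moreover have "{\<bar>\<Sum>n=1..M. \<Prod>i=1..k. x (n + d i) (s i)\<bar> | M d s. ccm_admissible k S N M d s} \<subseteq> f ` D"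
  proof
    fix v assume "v \<in> {\<bar>\<Sum>n=1..M. \<Prod>i=1..k. x (n + d i) (s i)\<bar> | M d s. ccm_admissible k S N M d s}"
    then obtain M d s where v: "v = \<bar>\<Sum>n=1..M. \<Prod>i=1..k. x (n + d i) (s i)\<bar>" and adm: "ccm_admissible k S N M d s"
      by blast
    have dk: "d i \<le> d k" if "i \<in> {1..k}" for i using adm that unfolding ccm_admissible_def by auto
    have MN: "M \<le> N" "d k < N" using adm unfolding ccm_admissible_def by auto
    have "d i \<le> N" if "i \<in> {1..k}" for i using dk[OF that] MN by linarith
    moreover have "s i \<le> S" if "i \<in> {1..k}" for i using adm that unfolding ccm_admissible_def by auto
    ultimately have "(M, restrict d {1..k}, restrict s {1..k}) \<in> D"
      using MN unfolding D_def by (simp add: PiE_iff)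
    moreover have "v = f (M, restrict d {1..k}, restrict s {1..k})"
      unfolding v f_def by (auto intro!: sum.cong prod.cong)
    ultimately show "v \<in> f ` D" by blast
  qed
  ultimately show ?thesis by (meson finite_subset finite_imageI)
qed

lemma cc_ge0: "0 \<le> cross_corr k S N x"
  unfolding cross_corr_def by (rule Max_ge) (use cc_finite in auto)

lemma cc_ge: "ccm_admissible k S N M d s \<Longrightarrow> \<bar>\<Sum>n=1..M. \<Prod>i=1..k. x (n + d i) (s i)\<bar> \<le> cross_corr k S N x"
  unfolding cross_corr_def by (rule Max_ge) (use cc_finite in auto)

lemma cc_le:
  assumes "\<And>M d s. ccm_admissible k S N M d s \<Longrightarrow> \<bar>\<Sum>n=1..M. \<Prod>i=1..k. x (n + d i) (s i)\<bar> \<le> B" "0 \<le> B"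
  shows "cross_corr k S N x \<le> B"
  unfolding cross_corr_def using assms cc_finite by (subst Max_le_iff) auto


lemma det_step:
  fixes x :: "nat \<Rightarrow> nat \<Rightarrow> real"
  assumes k: "k \<ge> 1" and NN: "N < N'" and t: "t \<ge> 0"
    and good: "\<And>h s a b. (h, s, a, b) \<in> Fset k S N N' \<Longrightarrow>
                 \<bar>Tsum k (hext k h) s {a..b} (\<lambda>(m, j). x m j)\<bar> \<le> t"
  shows "cross_corr k S N' x - cross_corr k S N x \<le> t"
proof -
  have "cross_corr k S N' x \<le> cross_corr k S N x + t"
  proof (rule cc_le)
    show "0 \<le> cross_corr k S N x + t" using cc_ge0[of k S N x] t by linarith
  next
    fix M d s assume adm: "ccm_admissible k S N' M d s"
    have dk: "d i \<le> d k" if "i \<in> {1..k}" for i using adm that k unfolding ccm_admissible_def by auto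
    have M1: "1 \<le> M" "M + d k \<le> N'" using adm unfolding ccm_admissible_def by auto
    have sS: "1 \<le> s i \<and> s i \<le> S" if "i \<in> {1..k}" for i using adm that unfolding ccm_admissible_def by auto
    have ddist: "d i \<noteq> d j" if "i \<in> {1..k}" "j \<in> {1..k}" "i \<noteq> j" "s i = s j" for i j
      using adm that unfolding ccm_admissible_def by auto
    define P where "P n = (\<Prod>i=1..k. x (n + d i) (s i))" for n
    define M1 where "M1 = (if d k < N then min M (N - d k) else 0)"
    have M1M: "M1 \<le> M" by (auto simp: M1_def)
    have split: "(\<Sum>n=1..M. P n) = (\<Sum>n=1..M1. P n) + (\<Sum>n\<in>{M1<..M}. P n)"
    proof -
      have "{1..M} = {1..M1} \<union> {M1<..M}" using M1M by auto
      then show ?thesis by (simp only:) (rule sum.union_disjoint, auto)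
    qed
    have first: "\<bar>\<Sum>n=1..M1. P n\<bar> \<le> cross_corr k S N x"
    proof (cases "M1 = 0")
      case True then show ?thesis using cc_ge0[of k S N x] by simp
    next
      case False
      then have "d k < N" "M1 \<le> N - d k" "1 \<le> M1" by (auto simp: M1_def split: if_splits)
      then have "ccm_admissible k S N M1 d s" using adm unfolding ccm_admissible_def by auto
      then show ?thesis unfolding P_def by (rule cc_ge)
    qed
    have tail: "\<bar>\<Sum>n\<in>{M1<..M}. P n\<bar> \<le> t"
    proof (cases "M1 = M")
      case True then show ?thesis using t by simp
    next
      case False
      then have M1lt: "M1 < M" using M1M by simp
      define h where "h = restrict (\<lambda>i. d k - d i) {1..k-1}"
      define s' where "s' = restrict s {1..k}"
      define a where "a = M1 + 1 + d k"
      define b where "b = M + d k"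
      have hx: "hext k h i = d k - d i" if "i \<in> {1..k}" for i
        using that by (auto simp: hext_def h_def)
      have Na: "N < a"
      proof (cases "d k < N")
        case True
        then have "M1 = min M (N - d k)" by (simp add: M1_def)
        with M1lt have "M1 = N - d k" by simp
        with True show ?thesis by (simp add: a_def)
      next
        case False then show ?thesis by (simp add: M1_def a_def)
      qed
      have mem: "(h, s', a, b) \<in> Fset k S N N'"
        unfolding Fset_def
      proof (intro CollectI case_prodI conjI)
        show "h \<in> PiE {1..k-1} (\<lambda>_. {..<N'})" using M1 by (auto simp: h_def PiE_iff)
        show "s' \<in> PiE {1..k} (\<lambda>_. {1..S})" using sS by (auto simp: s'_def PiE_iff)
        show "\<forall>i\<in>{1..k}. \<forall>j\<in>{1..k}. i \<noteq> j \<longrightarrow> (hext k h i, s' i) \<noteq> (hext k h j, s' j)"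
        proof (intro ballI impI)
          fix i j assume i: "i \<in> {1..k}" and j: "j \<in> {1..k}" and ij: "i \<noteq> j"
          show "(hext k h i, s' i) \<noteq> (hext k h j, s' j)"
          proof
            assume eq: "(hext k h i, s' i) = (hext k h j, s' j)"
            then have "d k - d i = d k - d j" "s i = s j" using i j hx by (auto simp: s'_def)
            then have "d i = d j" using dk[OF i] dk[OF j] by linarith
            with ddist[OF i j ij] \<open>s i = s j\<close> show False by simp
          qed
        qed
        show "N < a" by (rule Na)
        show "a \<le> b" using M1lt by (simp add: a_def b_def)
        show "b \<le> N'" using M1 by (simp add: b_def)
        show "\<forall>i\<in>{1..k}. hext k h i < a" using hx by (auto simp: a_def)
      qed
      have "Tsum k (hext k h) s' {a..b} (\<lambda>(m, j). x m j) = (\<Sum>n\<in>{M1<..M}. P n)"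
      proof -
        have img: "{a..b} = (\<lambda>n. n + d k) ` {M1<..M}"
        proof
          show "{a..b} \<subseteq> (\<lambda>n. n + d k) ` {M1<..M}"
          proof
            fix m assume "m \<in> {a..b}"
            then have "m - d k \<in> {M1<..M}" "m = (m - d k) + d k" by (auto simp: a_def b_def)
            then show "m \<in> (\<lambda>n. n + d k) ` {M1<..M}" by blast
          qed
        qed (auto simp: a_def b_def)
        have "Tsum k (hext k h) s' {a..b} (\<lambda>(m, j). x m j) = (\<Sum>n\<in>{M1<..M}. Pm k (hext k h) s' (n + d k) (\<lambda>(m, j). x m j))"
          unfolding Tsum_def img by (subst sum.reindex) (auto simp: inj_on_def)
        also have "\<dots> = (\<Sum>n\<in>{M1<..M}. P n)"
        proof (intro sum.cong refl)
          fix n assume "n \<in> {M1<..M}"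
          show "Pm k (hext k h) s' (n + d k) (\<lambda>(m, j). x m j) = P n"
            unfolding Pm_def P_def
          proof (intro prod.cong refl)
            fix i assume i: "i \<in> {1..k}"
            have "n + d k - hext k h i = n + d i" using hx[OF i] dk[OF i] by simp
            then show "(\<lambda>(m, j). x m j) (n + d k - hext k h i, s' i) = x (n + d i) (s i)"
              using i by (simp add: s'_def)
          qed
        qed
        finally show ?thesis .
      qed
      then show ?thesis using good[OF mem] by simp
    qed
    have "\<bar>\<Sum>n=1..M. P n\<bar> \<le> \<bar>\<Sum>n=1..M1. P n\<bar> + \<bar>\<Sum>n\<in>{M1<..M}. P n\<bar>"
      unfolding split by (rule abs_triangle_ineq)
    then show "\<bar>\<Sum>n=1..M. \<Prod>i=1..k. x (n + d i) (s i)\<bar> \<le> cross_corr k S N x + t"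
      using first tail unfolding P_def by linarith
  qed
  then show ?thesis by linarith
qed

lemma geo_inj_bound:
  fixes q :: real
  assumes q: "0 \<le> q" "q < 1" and A: "finite A" "inj_on f A" "f ` A \<subseteq> {..<n}"
  shows "(\<Sum>a\<in>A. q ^ f a) \<le> 1 / (1 - q)"
proof -
  have "(\<Sum>a\<in>A. q ^ f a) = (\<Sum>i\<in>f ` A. q ^ i)" using A by (simp add: sum.reindex)
  also have "\<dots> \<le> (\<Sum>i\<in>{..<n}. q ^ i)" using A q by (intro sum_mono2) auto
  also have "\<dots> \<le> (\<Sum>i. q ^ i)"
    using q by (intro sum_le_suminf summable_geometric) auto
  also have "\<dots> = 1 / (1 - q)" using q by (intro suminf_geometric) auto
  finally show ?thesis .
qed

lemma inv_one_minus_exp: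
  fixes y :: real assumes "y > 0" shows "1 / (1 - exp (-y)) \<le> 1 + 1 / y"
proof -
  have "1 + y \<le> exp y" by (rule exp_ge_add_one_self)
  then have e: "exp (-y) \<le> 1 / (1 + y)" using assms by (simp add: exp_minus field_simps)
  have "1 - exp (-y) \<ge> y / (1 + y)" using e assms by (simp add: field_simps)
  moreover have "y / (1 + y) > 0" using assms by simp
  ultimately have "1 / (1 - exp (-y)) \<le> 1 / (y / (1 + y))"
    using assms by (intro divide_left_mono mult_pos_pos) auto
  also have "\<dots> = 1 + 1 / y" using assms by (simp add: field_simps)
  finally show ?thesis .
qed

lemma per_tau:
  fixes \<beta> :: real
  assumes \<beta>: "\<beta> > 0" and ab: "N < a" "a \<le> b" "b \<le> N'"
  defines "u \<equiv> real N' - real N"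
  shows "exp (- (2 * \<beta> * u / (2 * real (card {a..b}))))
         \<le> exp (-\<beta>) * exp (-\<beta>/u) ^ (N' - b) * exp (-\<beta>/u) ^ (a - N - 1)"
proof -
  define L where "L = real (card {a..b})"
  have L: "L = real b + 1 - real a" using ab by (simp add: L_def)
  have u: "u > 0" using ab by (simp add: u_def)
  have Lpos: "L > 0" using ab L by simp
  have j: "real ((N' - b) + (a - N - 1)) = u - L" using ab by (simp add: L u_def of_nat_diff)
  have "exp (-\<beta>/u) ^ (N' - b) * exp (-\<beta>/u) ^ (a - N - 1) = exp (-\<beta>/u) ^ ((N' - b) + (a - N - 1))"
    by (simp add: power_add)
  also have "\<dots> = exp (real ((N' - b) + (a - N - 1)) * (-\<beta>/u))" by (simp only: exp_of_nat_mult)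
  also have "\<dots> = exp (- (\<beta> * (u - L) / u))" unfolding j by simp
  finally have eq: "exp (-\<beta>/u) ^ (N' - b) * exp (-\<beta>/u) ^ (a - N - 1) = exp (- (\<beta> * (u - L) / u))" .
  have key: "\<beta> + \<beta> * (u - L) / u \<le> \<beta> * u / L"
  proof -
    have sq: "u * u - L * (2 * u - L) = (u - L)^2" by (simp add: power2_eq_square algebra_simps)
    have "L * (2 * u - L) \<le> u * u" using sq zero_le_power2[of "u - L"] by linarith
    then have "(2 * u - L) / u \<le> u / L" using u Lpos by (simp add: field_simps)
    then have "\<beta> * ((2 * u - L) / u) \<le> \<beta> * (u / L)" using \<beta> by (intro mult_left_mono) auto
    moreover have "\<beta> + \<beta> * (u - L) / u = \<beta> * ((2 * u - L) / u)" using u by (simp add: field_simps)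
    ultimately show ?thesis by simp
  qed
  have "exp (- (2 * \<beta> * u / (2 * L))) = exp (- (\<beta> * u / L))" by simp
  also have "\<dots> \<le> exp (- \<beta> - \<beta> * (u - L) / u)" using key by simp
  also have "\<dots> = exp (-\<beta>) * exp (- (\<beta> * (u - L) / u))" by (simp add: exp_diff exp_minus field_simps)
  finally have "exp (- (2 * \<beta> * u / (2 * L))) \<le> exp (-\<beta>) * (exp (-\<beta>/u) ^ (N' - b) * exp (-\<beta>/u) ^ (a - N - 1))"
    by (simp only: eq[symmetric])
  then show ?thesis by (simp only: L_def mult.assoc)
qed


lemma sum_prod_snd:
  fixes F :: "'b \<Rightarrow> real"
  assumes "finite A" "finite B"
  shows "(\<Sum>(x, y)\<in>A \<times> B. F y) = real (card A) * sum F B"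
  using assms by (simp add: sum.cartesian_product[symmetric])

lemma Fset_finite: "finite (Fset k S N N')"
proof -
  have "Fset k S N N' \<subseteq> PiE {1..k-1} (\<lambda>_. {..<N'}) \<times> PiE {1..k} (\<lambda>_. {1..S}) \<times> {N<..N'} \<times> {N<..N'}"
    unfolding Fset_def by auto
  moreover have "finite (PiE {1..k-1} (\<lambda>_. {..<N'}) \<times> PiE {1..k} (\<lambda>_. {1..S}) \<times> {N<..N'} \<times> {N<..N'})"
    by (intro finite_cartesian_product finite_PiE) auto
  ultimately show ?thesis by (rule finite_subset)
qed

lemma Fset_sum_bound:
  assumes k: "k \<ge> 2" and NN: "N < N'" and N1: "1 \<le> N"
  defines "u \<equiv> real N' - real N" and "\<beta> \<equiv> 3 * (real k - 1) * ln (real N')"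
  shows "(\<Sum>(h, s, a, b)\<in>Fset k S N N'. 2 * exp (- (2 * \<beta> * u / (2 * real (card {a..b})))))
         \<le> real N' ^ (k - 1) * (real S ^ k * (2 * exp (-\<beta>) * ((1 + u / \<beta>) * (1 + u / \<beta>))))"
proof -
  have u: "u > 0" using NN by (simp add: u_def)
  have lnN: "ln (real N') > 0" using NN N1 by simp
  have \<beta>: "\<beta> > 0" unfolding \<beta>_def using k lnN by (intro mult_pos_pos) auto
  define q where "q = exp (-\<beta>/u)"
  have q: "0 \<le> q" "q < 1" using \<beta> u by (auto simp: q_def)
  have q1: "1 / (1 - q) \<le> 1 + u / \<beta>"
  proof -
    have "q = exp (- (\<beta> / u))" by (simp add: q_def)
    then have "1 / (1 - q) \<le> 1 + 1 / (\<beta> / u)" using inv_one_minus_exp[of "\<beta> / u"] \<beta> u by simp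
    then show ?thesis by simp
  qed
  define I where "I = {N<..N'}"
  define H where "H = PiE {1..k-1} (\<lambda>_. {..<N'})"
  define Sf where "Sf = PiE {1..k} (\<lambda>_. {1..S})"
  define G where "G = (\<lambda>(h::nat\<Rightarrow>nat, s::nat\<Rightarrow>nat, a::nat, b::nat). 2 * exp (-\<beta>) * (q ^ (N' - b) * q ^ (a - N - 1)))"
  have fin: "finite I" "finite H" "finite Sf" unfolding I_def H_def Sf_def by (auto intro: finite_PiE)
  have "(\<Sum>(h, s, a, b)\<in>Fset k S N N'. 2 * exp (- (2 * \<beta> * u / (2 * real (card {a..b})))))
      \<le> (\<Sum>\<tau>\<in>Fset k S N N'. G \<tau>)"
  proof (intro sum_mono)
    fix \<tau> assume "\<tau> \<in> Fset k S N N'"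
    then obtain h s a b where \<tau>: "\<tau> = (h, s, a, b)" "N < a" "a \<le> b" "b \<le> N'"
      unfolding Fset_def by auto
    show "(case \<tau> of (h, s, a, b) \<Rightarrow> 2 * exp (- (2 * \<beta> * u / (2 * real (card {a..b}))))) \<le> G \<tau>"
      using per_tau[OF \<beta> \<tau>(2-4)] unfolding \<tau>(1) G_def q_def u_def by simp
  qed
  also have "\<dots> \<le> (\<Sum>\<tau>\<in>H \<times> Sf \<times> I \<times> I. G \<tau>)"
  proof (rule sum_mono2)
    show "finite (H \<times> Sf \<times> I \<times> I)" using fin by auto
    show "Fset k S N N' \<subseteq> H \<times> Sf \<times> I \<times> I" unfolding Fset_def H_def Sf_def I_def by auto
    show "\<And>b. b \<in> H \<times> Sf \<times> I \<times> I - Fset k S N N' \<Longrightarrow> 0 \<le> G b" using q by (auto simp: G_def)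
  qed
  also have "(\<Sum>\<tau>\<in>H \<times> Sf \<times> I \<times> I. G \<tau>)
      = real (card H) * (real (card Sf) * (2 * exp (-\<beta>) * ((\<Sum>a\<in>I. q ^ (a - N - 1)) * (\<Sum>b\<in>I. q ^ (N' - b)))))"
  proof -
    have "(\<Sum>\<tau>\<in>H \<times> Sf \<times> I \<times> I. G \<tau>) = real (card H) * (\<Sum>\<tau>\<in>Sf \<times> I \<times> I. (\<lambda>(s, a, b). 2 * exp (-\<beta>) * (q ^ (N' - b) * q ^ (a - N - 1))) \<tau>)"
      unfolding G_def using fin by (subst sum_prod_snd[symmetric]) (auto intro!: sum.cong)
    also have "(\<Sum>\<tau>\<in>Sf \<times> I \<times> I. (\<lambda>(s, a, b). 2 * exp (-\<beta>) * (q ^ (N' - b) * q ^ (a - N - 1))) \<tau>)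
        = real (card Sf) * (\<Sum>\<tau>\<in>I \<times> I. (\<lambda>(a, b). 2 * exp (-\<beta>) * (q ^ (N' - b) * q ^ (a - N - 1))) \<tau>)"
      using fin by (subst sum_prod_snd[symmetric]) (auto intro!: sum.cong)
    also have "(\<Sum>\<tau>\<in>I \<times> I. (\<lambda>(a, b). 2 * exp (-\<beta>) * (q ^ (N' - b) * q ^ (a - N - 1))) \<tau>)
        = 2 * exp (-\<beta>) * ((\<Sum>a\<in>I. q ^ (a - N - 1)) * (\<Sum>b\<in>I. q ^ (N' - b)))"
    proof -
      have "(\<Sum>\<tau>\<in>I \<times> I. (\<lambda>(a, b). 2 * exp (-\<beta>) * (q ^ (N' - b) * q ^ (a - N - 1))) \<tau>)
          = (\<Sum>a\<in>I. \<Sum>b\<in>I. 2 * exp (-\<beta>) * (q ^ (N' - b) * q ^ (a - N - 1)))"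
        by (rule sum.cartesian_product[symmetric])
      also have "\<dots> = 2 * exp (-\<beta>) * ((\<Sum>a\<in>I. q ^ (a - N - 1)) * (\<Sum>b\<in>I. q ^ (N' - b)))"
        by (simp add: sum_distrib_left sum_distrib_right mult_ac)
      finally show ?thesis .
    qed
    finally show ?thesis .
  qed
  also have "\<dots> \<le> real N' ^ (k - 1) * (real S ^ k * (2 * exp (-\<beta>) * ((1 + u / \<beta>) * (1 + u / \<beta>))))"
  proof -
    have cH: "card H = N' ^ (k - 1)" unfolding H_def by (simp add: card_PiE)
    have cS: "card Sf = S ^ k" unfolding Sf_def by (simp add: card_PiE)
    have g1: "(\<Sum>b\<in>I. q ^ (N' - b)) \<le> 1 + u / \<beta>"
      using geo_inj_bound[OF q fin(1), of "\<lambda>b. N' - b" "N' - N"] q1 unfolding I_def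
      by (force simp: inj_on_def)
    have g2: "(\<Sum>a\<in>I. q ^ (a - N - 1)) \<le> 1 + u / \<beta>"
      using geo_inj_bound[OF q fin(1), of "\<lambda>a. a - N - 1" "N' - N"] q1 unfolding I_def
      by (force simp: inj_on_def)
    have "(\<Sum>a\<in>I. q ^ (a - N - 1)) * (\<Sum>b\<in>I. q ^ (N' - b)) \<le> (1 + u / \<beta>) * (1 + u / \<beta>)"
      using g1 g2 q u \<beta> by (intro mult_mono) (auto intro: sum_nonneg)
    then show ?thesis unfolding cH cS of_nat_power
      by (intro mult_left_mono) auto
  qed
  finally show ?thesis .
qed

lemma final_numeric:
  assumes k: "k \<ge> 2" and NN: "N < N'" and N1: "1 \<le> N"
  defines "u \<equiv> real N' - real N" and "\<beta> \<equiv> 3 * (real k - 1) * ln (real N')"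
  shows "real N' ^ (k - 1) * (real S ^ k * (2 * exp (-\<beta>) * ((1 + u / \<beta>) * (1 + u / \<beta>))))
         \<le> 4 * real S ^ k * (1 / real N' ^ 2 + u / (real N' * ln (real N') ^ 2))"
proof -
  define K where "K = k - 1"
  have K: "K \<ge> 1" "real k - 1 = real K" using k by (auto simp: K_def)
  have N'pos: "real N' > 0" "real N' \<ge> 2" using NN N1 by auto
  have lnN: "ln (real N') > 0" using N'pos by simp
  have u: "u > 0" "u \<le> real N'" using NN by (auto simp: u_def)
  have \<beta>: "\<beta> \<ge> ln (real N')" "\<beta> > 0" unfolding \<beta>_def K(2) using K lnN
    by (auto intro!: mult_pos_pos)
  have expb: "exp \<beta> = real N' ^ (3 * K)"
  proof -
    have "\<beta> = real (3 * K) * ln (real N')" unfolding \<beta>_def K(2) by simp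
    then show ?thesis using N'pos by (simp only: exp_of_nat_mult exp_ln)
  qed
  have A: "real N' ^ (k - 1) * exp (-\<beta>) \<le> 1 / real N' ^ 2"
  proof -
    have "real N' ^ (k - 1) * exp (-\<beta>) = real N' ^ K / real N' ^ (3 * K)"
      by (simp add: K_def exp_minus expb[unfolded K_def] field_simps)
    also have "\<dots> = 1 / real N' ^ (2 * K)"
    proof -
      have "real N' ^ (3 * K) = real N' ^ K * real N' ^ (2 * K)" by (simp add: power_add[symmetric])
      then show ?thesis using N'pos by simp
    qed
    also have "\<dots> \<le> 1 / real N' ^ 2"
      using N'pos K by (intro divide_left_mono power_increasing mult_pos_pos) auto
    finally show ?thesis .
  qed
  have B: "(1 + u / \<beta>) * (1 + u / \<beta>) \<le> 2 + 2 * (u^2 / ln (real N') ^ 2)"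
  proof -
    have ub: "u / \<beta> \<le> u / ln (real N')" using \<beta> u(1) lnN by (simp add: frac_le)
    have ub0: "0 \<le> u / \<beta>" using u \<beta> by simp
    have "(u / \<beta>)^2 \<le> (u / ln (real N'))^2" using ub ub0 by (intro power_mono) auto
    also have "\<dots> = u^2 / ln (real N') ^ 2" by (simp add: power_divide)
    finally have sq: "(u / \<beta>)^2 \<le> u^2 / ln (real N') ^ 2" .
    have gen: "(1 + v) * (1 + v) \<le> 2 + 2 * v^2" for v :: real
      using zero_le_power2[of "1 - v"] by (simp add: power2_eq_square algebra_simps)
    have "(1 + u / \<beta>) * (1 + u / \<beta>) \<le> 2 + 2 * (u / \<beta>)^2" by (rule gen)
    then show ?thesis using sq by linarith
  qed
  have C: "u^2 / (real N' ^ 2 * ln (real N') ^ 2) \<le> u / (real N' * ln (real N') ^ 2)"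
  proof -
    have "u^2 / (real N' ^ 2 * ln (real N') ^ 2) = (u / real N') * (u / (real N' * ln (real N') ^ 2))"
      by (simp add: power2_eq_square field_simps)
    also have "\<dots> \<le> 1 * (u / (real N' * ln (real N') ^ 2))"
      using u N'pos lnN by (intro mult_right_mono) auto
    finally show ?thesis by simp
  qed
  have S0: "real S ^ k \<ge> 0" by simp
  have "real N' ^ (k - 1) * (real S ^ k * (2 * exp (-\<beta>) * ((1 + u / \<beta>) * (1 + u / \<beta>))))
      = 2 * real S ^ k * (real N' ^ (k - 1) * exp (-\<beta>)) * ((1 + u / \<beta>) * (1 + u / \<beta>))"
    by (simp add: mult_ac)
  also have "\<dots> \<le> 2 * real S ^ k * (1 / real N' ^ 2) * (2 + 2 * (u^2 / ln (real N') ^ 2))"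
    using A B S0 by (intro mult_mono mult_left_mono) auto
  also have "\<dots> = 4 * real S ^ k * (1 / real N' ^ 2 + u^2 / (real N' ^ 2 * ln (real N') ^ 2))"
    using N'pos lnN by (simp add: field_simps)
  also have "\<dots> \<le> 4 * real S ^ k * (1 / real N' ^ 2 + u / (real N' * ln (real N') ^ 2))"
    using C S0 by (intro mult_left_mono add_left_mono) auto
  finally show ?thesis .
qed

lemma summable_tele:
  fixes d f :: "nat \<Rightarrow> real"
  assumes "\<And>n. 0 \<le> d n" "\<And>n. d n \<le> f n - f (Suc n)" "\<And>n. f n \<ge> 0"
  shows "summable d"
proof (rule summableI_nonneg_bounded[where x = "f 0"])
  show "0 \<le> d n" for n by (rule assms(1))
  fix n
  have "(\<Sum>i<n. d i) \<le> (\<Sum>i<n. f i - f (Suc i))" by (intro sum_mono assms(2))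
  also have "\<dots> = f 0 - f n" by (rule sum_lessThan_telescope')
  also have "\<dots> \<le> f 0" using assms(3)[of n] by simp
  finally show "(\<Sum>i<n. d i) \<le> f 0" .
qed

lemma inv_sq_tele:
  fixes a b :: real assumes "1 \<le> a" "a < b" "a + 1 \<le> b"
  shows "1 / b^2 \<le> 1 / a - 1 / b"
proof -
  have "1 / a - 1 / b = (b - a) / (a * b)" using assms by (simp add: field_simps)
  also have "\<dots> \<ge> 1 / (a * b)" using assms
    by (intro divide_right_mono) auto
  moreover have "1 / (a * b) \<ge> 1 / b^2" using assms
    by (intro divide_left_mono) (auto simp: power2_eq_square intro!: mult_pos_pos)
  ultimately show ?thesis by simp
qed

lemma ln_tele:
  fixes a b :: real assumes "2 \<le> a" "a < b"
  shows "(b - a) / (b * ln b ^ 2) \<le> 1 / ln a - 1 / ln b"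
proof -
  have a0: "a > 0" "b > 0" using assms by auto
  have la: "ln a > 0" "ln b > 0" using assms by auto
  have lab: "ln a \<le> ln b" using assms by auto
  have "ln (a / b) \<le> a / b - 1" using a0 by (intro ln_le_minus_one) auto
  then have d: "ln b - ln a \<ge> (b - a) / b" using a0 by (simp add: ln_div field_simps)
  have "1 / ln a - 1 / ln b = (ln b - ln a) / (ln a * ln b)" using la by (simp add: field_simps)
  also have "\<dots> \<ge> (ln b - ln a) / (ln b ^ 2)"
    using la lab d assms a0 by (intro divide_left_mono) (auto simp: power2_eq_square intro!: mult_pos_pos order_trans[OF _ d])
  moreover have "(ln b - ln a) / (ln b ^ 2) \<ge> ((b - a) / b) / (ln b ^ 2)"
    using d la by (intro divide_right_mono) auto
  ultimately show ?thesis by (simp add: field_simps)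
qed

lemma summable_c:
  fixes Ns :: "nat \<Rightarrow> nat" and c :: real
  assumes mono: "strict_mono Ns" and pos: "\<And>r. Ns r \<ge> 1"
  shows "summable (\<lambda>r. c * (1 / real (Ns (Suc r)) ^ 2 +
           (real (Ns (Suc r)) - real (Ns r)) / (real (Ns (Suc r)) * ln (real (Ns (Suc r))) ^ 2)))"
proof -
  have lt: "Ns r < Ns (Suc r)" for r using mono by (simp add: strict_mono_def)
  have ge2: "Ns (Suc r) \<ge> 2" for r using lt[of r] pos[of r] by linarith
  have s1: "summable (\<lambda>r. 1 / real (Ns (Suc r)) ^ 2)"
  proof (rule summable_tele[where f = "\<lambda>r. 1 / real (Ns r)"])
    show "0 \<le> 1 / real (Ns (Suc n)) ^ 2" for n by simp
    show "1 / real (Ns (Suc n)) ^ 2 \<le> 1 / real (Ns n) - 1 / real (Ns (Suc n))" for n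
      using pos[of n] lt[of n] by (intro inv_sq_tele) auto
    show "0 \<le> 1 / real (Ns n)" for n by simp
  qed
  define d where "d r = (real (Ns (Suc r)) - real (Ns r)) / (real (Ns (Suc r)) * ln (real (Ns (Suc r))) ^ 2)" for r
  have "summable (\<lambda>r. d (Suc r))"
  proof (rule summable_tele[where f = "\<lambda>r. 1 / ln (real (Ns (Suc r)))"])
    show "0 \<le> d (Suc n)" for n using lt[of "Suc n"] by (simp add: d_def)
    show "d (Suc n) \<le> 1 / ln (real (Ns (Suc n))) - 1 / ln (real (Ns (Suc (Suc n))))" for n
      unfolding d_def using ge2[of n] lt[of "Suc n"] by (intro ln_tele) auto
    show "0 \<le> 1 / ln (real (Ns (Suc n)))" for n using ge2[of n] by simp
  qed
  then have s2: "summable d" by (simp add: summable_Suc_iff)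
  show ?thesis using summable_mult[OF summable_add[OF s1 s2], of c] by (simp add: d_def)
qed

lemma Tsum_loc:
  assumes "(h, s, a, b) \<in> Fset k S N N'" "\<forall>c\<in>{1..N'} \<times> {1..S}. y c = z c"
  shows "Tsum k (hext k h) s {a..b} y = Tsum k (hext k h) s {a..b} z"
proof -
  have F: "\<forall>i\<in>{1..k}. hext k h i < a" "b \<le> N'" "s \<in> PiE {1..k} (\<lambda>_. {1..S})"
    using assms(1) unfolding Fset_def by auto
  show ?thesis unfolding Tsum_def Pm_def
  proof (intro sum.cong refl prod.cong)
    fix m i assume m: "m \<in> {a..b}" and i: "i \<in> {1..k}"
    have "(m - hext k h i, s i) \<in> {1..N'} \<times> {1..S}" using F m i by (force simp: PiE_iff)
    then show "y (m - hext k h i, s i) = z (m - hext k h i, s i)" using assms(2) by blast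
  qed
qed

lemma Tsum_meas:
  assumes "\<And>n s. e n s \<in> borel_measurable M"
  shows "(\<lambda>\<omega>. Tsum k h s W (\<lambda>(m, j). e m j \<omega>)) \<in> borel_measurable M"
  unfolding Tsum_def Pm_def using assms by (intro borel_measurable_sum borel_measurable_prod) auto

context prob_space begin

lemma bad_prob:
  fixes e :: "nat \<Rightarrow> nat \<Rightarrow> 'a \<Rightarrow> real"
  assumes k: "k \<ge> 2" and S: "S \<ge> 1" and NN: "N < N'" and N1: "1 \<le> N"
    and indep: "indep_vars (\<lambda>_. borel) (\<lambda>(n, s). e n s) {(n, s). 1 \<le> n \<and> 1 \<le> s \<and> s \<le> S}"
    and half: "\<And>n s. 1 \<le> n \<Longrightarrow> 1 \<le> s \<Longrightarrow> s \<le> S \<Longrightarrow>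
           prob {\<omega> \<in> space M. e n s \<omega> = 1} = 1/2 \<and> prob {\<omega> \<in> space M. e n s \<omega> = -1} = 1/2"
  defines "thr \<equiv> sqrt (6 * (real N' - real N) * (real k - 1) * ln (real N'))"
  shows "prob {\<omega>\<in>space M. \<exists>(h, s, a, b)\<in>Fset k S N N'. thr < \<bar>Tsum k (hext k h) s {a..b} (\<lambda>(m, j). e m j \<omega>)\<bar>}
         \<le> 4 * real S ^ k * (1 / real N' ^ 2 + (real N' - real N) / (real N' * ln (real N') ^ 2))"
proof -
  define C where "C = {1..N'} \<times> {1..S}"
  define X where "X = PiE C (\<lambda>_. {-1,1::real})"
  define F where "F = Fset k S N N'"
  define Q where "Q y = (\<exists>(h, s, a, b)\<in>F. thr < \<bar>Tsum k (hext k h) s {a..b} y\<bar>)" for y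
  define u where "u = real N' - real N"
  define \<beta> where "\<beta> = 3 * (real k - 1) * ln (real N')"
  have fC: "finite C" "C \<noteq> {}" using NN S by (auto simp: C_def)
  have fF: "finite F" unfolding F_def by (rule Fset_finite)
  have CI: "C \<subseteq> {(n, s). 1 \<le> n \<and> 1 \<le> s \<and> s \<le> S}" by (auto simp: C_def)
  have eqfun: "(\<lambda>c. (\<lambda>(n, s). e n s) c \<omega>) = (\<lambda>(m, j). e m j \<omega>)" for \<omega>
    by (auto simp: fun_eq_iff)
  have thr0: "thr \<ge> 0" unfolding thr_def using NN k N1 by (intro real_sqrt_ge_zero mult_nonneg_nonneg) auto
  have thr2: "thr^2 = 2 * \<beta> * u"
  proof -
    have "6 * (real N' - real N) * (real k - 1) * ln (real N') \<ge> 0"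
      using NN k N1 by (intro mult_nonneg_nonneg) auto
    then show ?thesis unfolding thr_def \<beta>_def u_def by (simp add: algebra_simps)
  qed
  have "prob {\<omega>\<in>space M. Q (\<lambda>c. (\<lambda>(n, s). e n s) c \<omega>)} \<le> real (card {x\<in>X. Q x}) / 2 ^ card C"
    unfolding X_def
  proof (rule prob_by_count[OF indep fC CI])
    fix c assume "c \<in> C"
    then obtain n s where c: "c = (n, s)" "1 \<le> n" "1 \<le> s" "s \<le> S" by (auto simp: C_def)
    show "prob {\<omega>\<in>space M. (\<lambda>(n, s). e n s) c \<omega> = 1} = 1/2 \<and> prob {\<omega>\<in>space M. (\<lambda>(n, s). e n s) c \<omega> = -1} = 1/2"
      using half[OF c(2-4)] by (simp add: c)
  next
    fix y z :: "nat \<times> nat \<Rightarrow> real" assume yz: "\<forall>c\<in>C. y c = z c"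
    have L: "Tsum k (hext k h) s {a..b} y = Tsum k (hext k h) s {a..b} z" if "(h, s, a, b) \<in> F" for h s a b
      using Tsum_loc[OF _ yz[unfolded C_def]] that unfolding F_def by blast
    show "Q y = Q z" unfolding Q_def
    proof
      assume "\<exists>(h, s, a, b)\<in>F. thr < \<bar>Tsum k (hext k h) s {a..b} y\<bar>"
      then obtain h s a b where "(h, s, a, b) \<in> F" "thr < \<bar>Tsum k (hext k h) s {a..b} y\<bar>" by auto
      then show "\<exists>(h, s, a, b)\<in>F. thr < \<bar>Tsum k (hext k h) s {a..b} z\<bar>" using L[of h s a b] by (intro bexI[of _ "(h, s, a, b)"]) simp_all
    next
      assume "\<exists>(h, s, a, b)\<in>F. thr < \<bar>Tsum k (hext k h) s {a..b} z\<bar>"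
      then obtain h s a b where "(h, s, a, b) \<in> F" "thr < \<bar>Tsum k (hext k h) s {a..b} z\<bar>" by auto
      then show "\<exists>(h, s, a, b)\<in>F. thr < \<bar>Tsum k (hext k h) s {a..b} y\<bar>" using L[of h s a b] by (intro bexI[of _ "(h, s, a, b)"]) simp_all
    qed
  qed
  also have "real (card {x\<in>X. Q x}) \<le> (\<Sum>(h, s, a, b)\<in>F. 2 * real (card X) * exp (- (thr^2 / (2 * card {a..b}))))"
  proof -
    have eq: "{x\<in>X. Q x} = (\<Union>(h, s, a, b)\<in>F. {x\<in>X. thr < \<bar>Tsum k (hext k h) s {a..b} x\<bar>})"
      unfolding Q_def by auto
    have "card {x\<in>X. Q x} \<le> (\<Sum>(h, s, a, b)\<in>F. card {x\<in>X. thr < \<bar>Tsum k (hext k h) s {a..b} x\<bar>})"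
    proof -
      have "card {x\<in>X. Q x} \<le> (\<Sum>\<tau>\<in>F. card ((\<lambda>(h, s, a, b). {x\<in>X. thr < \<bar>Tsum k (hext k h) s {a..b} x\<bar>}) \<tau>))"
        unfolding eq by (rule card_UN_le[OF fF])
      also have "\<dots> = (\<Sum>(h, s, a, b)\<in>F. card {x\<in>X. thr < \<bar>Tsum k (hext k h) s {a..b} x\<bar>})"
        by (intro sum.cong refl) (auto split: prod.splits)
      finally show ?thesis .
    qed
    then have "real (card {x\<in>X. Q x}) \<le> (\<Sum>(h, s, a, b)\<in>F. real (card {x\<in>X. thr < \<bar>Tsum k (hext k h) s {a..b} x\<bar>}))"
    proof -
      have "real (card {x\<in>X. Q x}) \<le> real (\<Sum>(h, s, a, b)\<in>F. card {x\<in>X. thr < \<bar>Tsum k (hext k h) s {a..b} x\<bar>})"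
        using \<open>card {x\<in>X. Q x} \<le> _\<close> by (rule of_nat_mono)
      also have "\<dots> = (\<Sum>(h, s, a, b)\<in>F. real (card {x\<in>X. thr < \<bar>Tsum k (hext k h) s {a..b} x\<bar>}))"
        by (subst of_nat_sum) (intro sum.cong refl, auto split: prod.splits)
      finally show ?thesis .
    qed
    also have "\<dots> \<le> (\<Sum>(h, s, a, b)\<in>F. 2 * real (card X) * exp (- (thr^2 / (2 * card {a..b}))))"
    proof (intro sum_mono)
      fix \<tau> assume "\<tau> \<in> F"
      then obtain h s a b where \<tau>: "\<tau> = (h, s, a, b)" and mem: "(h, s, a, b) \<in> Fset k S N N'"
        unfolding F_def by (cases \<tau>) auto
      have Fp: "h \<in> PiE {1..k-1} (\<lambda>_. {..<N'})" "s \<in> PiE {1..k} (\<lambda>_. {1..S})"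
          "\<forall>i\<in>{1..k}. \<forall>j\<in>{1..k}. i \<noteq> j \<longrightarrow> (hext k h i, s i) \<noteq> (hext k h j, s j)"
          "N < a" "a \<le> b" "b \<le> N'" "\<forall>i\<in>{1..k}. hext k h i < a"
        using mem unfolding Fset_def by auto
      have pos: "\<forall>m\<in>{a..b}. \<forall>i\<in>{1..k}. hext k h i < m \<and> (m - hext k h i, s i) \<in> C"
      proof (intro ballI conjI)
        fix m i assume m: "m \<in> {a..b}" and i: "i \<in> {1..k}"
        have hi: "hext k h i < a" using Fp(7) i by blast
        then show "hext k h i < m" using m by auto
        have "s i \<in> {1..S}" using Fp(2) i by (simp add: PiE_iff)
        then show "(m - hext k h i, s i) \<in> C" using hi m Fp(6) by (auto simp: C_def)
      qed
      show "(case \<tau> of (h, s, a, b) \<Rightarrow> real (card {x\<in>X. thr < \<bar>Tsum k (hext k h) s {a..b} x\<bar>}))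
          \<le> (case \<tau> of (h, s, a, b) \<Rightarrow> 2 * real (card X) * exp (- (thr^2 / (2 * card {a..b}))))"
        unfolding \<tau> X_def using abs_tail_count[OF fC(1) finite_atLeastAtMost _ _ thr0 pos Fp(3)] k Fp(5)
        by (simp add: Suc_le_eq)
    qed
    finally show ?thesis .
  qed
  then have "real (card {x\<in>X. Q x}) / 2 ^ card C \<le> (\<Sum>(h, s, a, b)\<in>F. 2 * real (card X) * exp (- (thr^2 / (2 * card {a..b})))) / 2 ^ card C"
    by (intro divide_right_mono) auto
  also have "\<dots> = (\<Sum>(h, s, a, b)\<in>F. 2 * exp (- (2 * \<beta> * u / (2 * real (card {a..b})))))"
  proof -
    have cX: "real (card X) = 2 ^ card C" unfolding X_def card_PiE[OF fC(1)] by simp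
    show ?thesis unfolding cX thr2 sum_divide_distrib by (intro sum.cong refl) (auto split: prod.splits)
  qed
  also have "\<dots> \<le> real N' ^ (k - 1) * (real S ^ k * (2 * exp (-\<beta>) * ((1 + u / \<beta>) * (1 + u / \<beta>))))"
    unfolding F_def u_def \<beta>_def by (rule Fset_sum_bound[OF k NN N1])
  also have "\<dots> \<le> 4 * real S ^ k * (1 / real N' ^ 2 + u / (real N' * ln (real N') ^ 2))"
    unfolding u_def \<beta>_def by (rule final_numeric[OF k NN N1])
  finally have "prob {\<omega>\<in>space M. Q (\<lambda>c. (\<lambda>(n, s). e n s) c \<omega>)}
    \<le> 4 * real S ^ k * (1 / real N' ^ 2 + u / (real N' * ln (real N') ^ 2))" .
  then show ?thesis unfolding eqfun Q_def F_def u_def .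
qed

end

theorem lemma13:
  fixes M :: "'a measure" and e :: "nat \<Rightarrow> nat \<Rightarrow> 'a \<Rightarrow> real"
    and S k :: nat and Ns :: "nat \<Rightarrow> nat"
  assumes "prob_space M"
    and "S \<ge> 1" and "k \<ge> 2"
    and "\<And>n s. e n s \<in> borel_measurable M"
    and "prob_space.indep_vars M (\<lambda>_. borel) (\<lambda>(n, s). e n s)
           {(n, s). 1 \<le> n \<and> 1 \<le> s \<and> s \<le> S}"
    and "\<And>n s. 1 \<le> n \<Longrightarrow> 1 \<le> s \<Longrightarrow> s \<le> S \<Longrightarrow>
           measure M {\<omega> \<in> space M. e n s \<omega> = 1} = 1/2 \<and>
           measure M {\<omega> \<in> space M. e n s \<omega> = -1} = 1/2"
    and "strict_mono Ns" and "\<And>r. Ns r \<ge> 1"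
  shows "AE \<omega> in M. eventually (\<lambda>r.
           cross_corr k S (Ns (Suc r)) (\<lambda>n s. e n s \<omega>) - cross_corr k S (Ns r) (\<lambda>n s. e n s \<omega>)
           \<le> sqrt (6 * (real (Ns (Suc r)) - real (Ns r)) * (real k - 1) * ln (real (Ns (Suc r)))))
         sequentially"
proof -
  interpret P: prob_space M by (rule assms(1))
  define thr where "thr r = sqrt (6 * (real (Ns (Suc r)) - real (Ns r)) * (real k - 1) * ln (real (Ns (Suc r))))" for r
  define bad where "bad r = {\<omega>\<in>space M. \<exists>(h, s, a, b)\<in>Fset k S (Ns r) (Ns (Suc r)).
                     thr r < \<bar>Tsum k (hext k h) s {a..b} (\<lambda>(m, j). e m j \<omega>)\<bar>}" for r
  define c where "c r = 4 * real S ^ k * (1 / real (Ns (Suc r)) ^ 2 +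
           (real (Ns (Suc r)) - real (Ns r)) / (real (Ns (Suc r)) * ln (real (Ns (Suc r))) ^ 2))" for r
  have lt: "Ns r < Ns (Suc r)" for r using assms(7) by (simp add: strict_mono_def)
  have N1: "1 \<le> Ns r" for r by (rule assms(8))
  have k1: "k \<ge> 1" using assms(3) by simp
  have thr0: "thr r \<ge> 0" for r unfolding thr_def using lt[of r] N1[of r] assms(3)
    by (intro real_sqrt_ge_zero mult_nonneg_nonneg) auto
  have badm: "bad r \<in> sets M" for r
  proof -
    have [measurable]: "(\<lambda>\<omega>. Tsum k h s W (\<lambda>(m, j). e m j \<omega>)) \<in> borel_measurable M" for h s W
      by (rule Tsum_meas[OF assms(4)])
    have eq: "bad r = (\<Union>\<tau>\<in>Fset k S (Ns r) (Ns (Suc r)).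
        {\<omega>\<in>space M. thr r < \<bar>Tsum k (hext k (fst \<tau>)) (fst (snd \<tau>)) {fst (snd (snd \<tau>))..snd (snd (snd \<tau>))} (\<lambda>(m, j). e m j \<omega>)\<bar>})"
      unfolding bad_def by (auto simp: case_prod_unfold)
    show ?thesis unfolding eq
      by (intro sets.finite_UN Fset_finite ballI) measurable
  qed
  have badp: "measure M (bad r) \<le> c r" for r
    unfolding bad_def c_def thr_def
    by (rule P.bad_prob[OF assms(3) assms(2) lt N1 assms(5) assms(6)])
  have summ: "summable (\<lambda>r. measure M (bad r))"
  proof (rule summable_comparison_test')
    show "summable c" unfolding c_def by (rule summable_c[OF assms(7,8)])
    show "norm (measure M (bad r)) \<le> c r" for r using badp[of r] by simp
  qed
  have BC: "AE \<omega> in M. eventually (\<lambda>r. \<omega> \<in> space M - bad r) sequentially"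
    by (rule borel_cantelli_AE1[OF badm]) (auto simp: P.emeasure_eq_measure summ)
  show ?thesis
    using BC
  proof (rule AE_mp)
    show "AE \<omega> in M. eventually (\<lambda>r. \<omega> \<in> space M - bad r) sequentially \<longrightarrow>
      eventually (\<lambda>r. cross_corr k S (Ns (Suc r)) (\<lambda>n s. e n s \<omega>) - cross_corr k S (Ns r) (\<lambda>n s. e n s \<omega>)
           \<le> sqrt (6 * (real (Ns (Suc r)) - real (Ns r)) * (real k - 1) * ln (real (Ns (Suc r))))) sequentially"
    proof (rule AE_I2, rule impI)
      fix \<omega> assume \<omega>: "\<omega> \<in> space M" and ev: "eventually (\<lambda>r. \<omega> \<in> space M - bad r) sequentially"
      from ev show "eventually (\<lambda>r. cross_corr k S (Ns (Suc r)) (\<lambda>n s. e n s \<omega>) - cross_corr k S (Ns r) (\<lambda>n s. e n s \<omega>)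
           \<le> sqrt (6 * (real (Ns (Suc r)) - real (Ns r)) * (real k - 1) * ln (real (Ns (Suc r))))) sequentially"
      proof (rule eventually_mono)
        fix r assume r: "\<omega> \<in> space M - bad r"
        have good: "\<bar>Tsum k (hext k h) s {a..b} (\<lambda>(m, j). e m j \<omega>)\<bar> \<le> thr r"
          if "(h, s, a, b) \<in> Fset k S (Ns r) (Ns (Suc r))" for h s a b
          using r that \<omega> unfolding bad_def by (force simp: not_less)
        have "cross_corr k S (Ns (Suc r)) (\<lambda>n s. e n s \<omega>) - cross_corr k S (Ns r) (\<lambda>n s. e n s \<omega>) \<le> thr r"
          by (rule det_step[OF k1 lt thr0]) (use good in simp)
        then show "cross_corr k S (Ns (Suc r)) (\<lambda>n s. e n s \<omega>) - cross_corr k S (Ns r) (\<lambda>n s. e n s \<omega>)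
           \<le> sqrt (6 * (real (Ns (Suc r)) - real (Ns r)) * (real k - 1) * ln (real (Ns (Suc r))))"
          by (simp add: thr_def)
      qed
    qed
  qed
qed


end
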